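(* Let $0<1/n_0\ll\delta\ll 1$, and let $t,k,n\in\mathbb N$ with $n\geq n_0$ and $k^2-k+2\leq n\leq k^2+k+1$. Let $\mathcal H$ be an $n$-vertex hypergraph with codegree at most $t$ such that $|V(e)|\geq(1-\delta)\sqrt n$ for every edge $e$, and such that $\mathcal H$ has at most $t/(2\delta)$ edges of size at most $k$. If $e\in\mathcal H$ satisfies $|V(e)|\leq k$, then $|N(e)|\leq tn-3$.
   Context: Constant hierarchies: a statement holding whenever $0<a\ll b\le 1$ means there is a non-decreasing function $f:(0,1]\to(0,1]$ such that it holds for all $a,b$ with $a\leq f(b)$; constants are chosen from right to left. A hypergraph $\mathcal H$ has a finite vertex set $V(\mathcal H)$ and a finite set of edges, each edge $e$ with a nonempty set $V(e)\subseteq V(\mathcal H)$ (multiple edges allowed); $n$-vertex means $|V(\mathcal H)|=n$; the size of $e$ is $|V(e)|$. The codegree of $\mathcal H$ is the maximum over distinct vertices $u,v$ of the number of edges containing both. $N(e)$ is the set of edges $f\neq e$ with $V(e)\cap V(f)\neq\emptyset$. *)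

theory Defs
  imports Complex_Main
begin

text \<open>A hypergraph with vertex set Vs, a finite set E of edge labels (allowing
multiple edges with the same vertex set), and a map V sending each edge to its
nonempty vertex set.\<close>
definition hypergraph :: "'v set \<Rightarrow> 'e set \<Rightarrow> ('e \<Rightarrow> 'v set) \<Rightarrow> bool" where
  "hypergraph Vs E V \<longleftrightarrow> finite Vs \<and> finite E \<and> (\<forall>e\<in>E. V e \<noteq> {} \<and> V e \<subseteq> Vs)"

definition codegree :: "'v set \<Rightarrow> 'e set \<Rightarrow> ('e \<Rightarrow> 'v set) \<Rightarrow> nat" where
  "codegree Vs E V =
     Max (insert 0 {card {e\<in>E. u \<in> V e \<and> w \<in> V e} | u w. u \<in> Vs \<and> w \<in> Vs \<and> u \<noteq> w})"

definition nbhd :: "'e set \<Rightarrow> ('e \<Rightarrow> 'v set) \<Rightarrow> 'e \<Rightarrow> 'e set" where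
  "nbhd E V e = {f\<in>E. f \<noteq> e \<and> V e \<inter> V f \<noteq> {}}"

end

theory Submission
  imports Defs
begin

lemma cnt_sum: "finite A \<Longrightarrow> (\<Sum>u\<in>A. if P u then 1 else 0::nat) = card {u\<in>A. P u}"
  by (simp add: sum.If_cases Int_def)

lemma codeg_le:
  assumes "hypergraph Vs E V" "u \<in> Vs" "w \<in> Vs" "u \<noteq> w"
  shows "card {f\<in>E. u \<in> V f \<and> w \<in> V f} \<le> codegree Vs E V"
proof -
  have fin: "finite Vs" using assms(1) unfolding hypergraph_def by blast
  have "{card {e\<in>E. u \<in> V e \<and> w \<in> V e} | u w. u \<in> Vs \<and> w \<in> Vs \<and> u \<noteq> w}
        \<subseteq> (\<lambda>(u,w). card {e\<in>E. u \<in> V e \<and> w \<in> V e}) ` (Vs \<times> Vs)" by auto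
  hence "finite {card {e\<in>E. u \<in> V e \<and> w \<in> V e} | u w. u \<in> Vs \<and> w \<in> Vs \<and> u \<noteq> w}"
    using fin by (meson finite_SigmaI finite_imageI finite_subset)
  thus ?thesis unfolding codegree_def
    by (intro Max_ge) (use assms in auto)
qed

lemma vertex_sum:
  assumes H: "hypergraph Vs E V" and v: "v \<in> Vs" and ct: "codegree Vs E V \<le> t"
  shows "(\<Sum>f\<in>{f\<in>E. v \<in> V f}. card (V f) - 1) \<le> (card Vs - 1) * t"
proof -
  have finVs: "finite Vs" and finE: "finite E" and sub: "\<And>f. f \<in> E \<Longrightarrow> V f \<subseteq> Vs"
    using H unfolding hypergraph_def by auto
  have eq1: "card (V f) - 1 = (\<Sum>u\<in>Vs-{v}. if u \<in> V f then 1 else 0)" if "f \<in> {f\<in>E. v \<in> V f}" for f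
  proof -
    have "card (V f) - 1 = card (V f - {v})" using that by (simp add: card_Diff_singleton)
    also have "V f - {v} = {u\<in>Vs-{v}. u \<in> V f}" using sub[of f] that by auto
    also have "card \<dots> = (\<Sum>u\<in>Vs-{v}. if u \<in> V f then 1 else 0)"
      using finVs by (simp add: cnt_sum)
    finally show ?thesis .
  qed
  have "(\<Sum>f\<in>{f\<in>E. v \<in> V f}. card (V f) - 1)
      = (\<Sum>f\<in>{f\<in>E. v \<in> V f}. \<Sum>u\<in>Vs-{v}. if u \<in> V f then 1 else 0)"
    using eq1 by (rule sum.cong[OF refl])
  also have "\<dots> = (\<Sum>u\<in>Vs-{v}. \<Sum>f\<in>{f\<in>E. v \<in> V f}. if u \<in> V f then 1 else 0)"
    by (rule sum.swap)
  also have "\<dots> = (\<Sum>u\<in>Vs-{v}. card {f\<in>E. v \<in> V f \<and> u \<in> V f})"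
    using finE by (intro sum.cong refl) (simp add: cnt_sum conj_assoc)
  also have "\<dots> \<le> (\<Sum>u\<in>Vs-{v}. t)"
  proof (rule sum_mono)
    fix u assume "u \<in> Vs - {v}"
    hence "card {f\<in>E. v \<in> V f \<and> u \<in> V f} \<le> codegree Vs E V"
      using codeg_le[OF H v, of u] by auto
    thus "card {f\<in>E. v \<in> V f \<and> u \<in> V f} \<le> t" using ct by linarith
  qed
  also have "\<dots> = (card Vs - 1) * t" using v finVs by simp
  finally show ?thesis .
qed

lemma edge_sum:
  assumes H: "hypergraph Vs E V" and ct: "codegree Vs E V \<le> t" and e: "e \<in> E"
  shows "(\<Sum>f\<in>E-{e}. card (V f \<inter> V e) * (card (V f) - 1))
          \<le> card (V e) * ((card Vs - 1) * t - (card (V e) - 1))"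
proof -
  have finVs: "finite Vs" and finE: "finite E" and sub: "\<And>f. f \<in> E \<Longrightarrow> V f \<subseteq> Vs"
    using H unfolding hypergraph_def by auto
  have finVe: "finite (V e)" using sub[OF e] finVs finite_subset by blast
  have "(\<Sum>f\<in>E-{e}. card (V f \<inter> V e) * (card (V f) - 1))
      = (\<Sum>f\<in>E-{e}. \<Sum>v\<in>V e. if v \<in> V f then card (V f) - 1 else 0)"
  proof (rule sum.cong[OF refl])
    fix f assume "f \<in> E - {e}"
    have "card (V f \<inter> V e) = (\<Sum>v\<in>V e. if v \<in> V f then 1 else 0)"
      using finVe by (simp add: cnt_sum Int_def conj_commute)
    hence "card (V f \<inter> V e) * (card (V f) - 1) = (\<Sum>v\<in>V e. (if v \<in> V f then 1 else 0) * (card (V f) - 1))"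
      by (simp add: sum_distrib_right)
    thus "card (V f \<inter> V e) * (card (V f) - 1) = (\<Sum>v\<in>V e. if v \<in> V f then card (V f) - 1 else 0)"
      by (auto intro: sum.cong)
  qed
  also have "\<dots> = (\<Sum>v\<in>V e. \<Sum>f\<in>E-{e}. if v \<in> V f then card (V f) - 1 else 0)"
    by (rule sum.swap)
  also have "\<dots> = (\<Sum>v\<in>V e. \<Sum>f\<in>{f\<in>E. v \<in> V f}-{e}. card (V f) - 1)"
  proof (rule sum.cong[OF refl])
    fix v
    have "{f\<in>E. v \<in> V f}-{e} = {f\<in>E-{e}. v \<in> V f}" by auto
    thus "(\<Sum>f\<in>E-{e}. if v \<in> V f then card (V f) - 1 else 0) = (\<Sum>f\<in>{f\<in>E. v \<in> V f}-{e}. card (V f) - 1)"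
      using finE by (simp only: sum.inter_filter finite_Diff)
  qed
  also have "\<dots> \<le> (\<Sum>v\<in>V e. (card Vs - 1) * t - (card (V e) - 1))"
  proof (rule sum_mono)
    fix v assume v: "v \<in> V e"
    have fin: "finite {f\<in>E. v \<in> V f}" using finE by simp
    have ein: "e \<in> {f\<in>E. v \<in> V f}" using e v by simp
    have "(\<Sum>f\<in>{f\<in>E. v \<in> V f}. card (V f) - 1)
        = (card (V e) - 1) + (\<Sum>f\<in>{f\<in>E. v \<in> V f}-{e}. card (V f) - 1)"
      using sum.remove[OF fin ein] by simp
    moreover have "(\<Sum>f\<in>{f\<in>E. v \<in> V f}. card (V f) - 1) \<le> (card Vs - 1) * t"
      using vertex_sum[OF H _ ct, of v] sub[OF e] v by auto
    ultimately show "(\<Sum>f\<in>{f\<in>E. v \<in> V f}-{e}. card (V f) - 1) \<le> (card Vs - 1) * t - (card (V e) - 1)"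
      by linarith
  qed
  also have "\<dots> = card (V e) * ((card Vs - 1) * t - (card (V e) - 1))" by simp
  finally show ?thesis .
qed

lemma vertex_lb:
  assumes H: "hypergraph Vs E V" and ct: "codegree Vs E V \<le> t" and e: "e \<in> E" and v: "v \<in> V e"
  shows "card (V e) - 1 \<le> (card Vs - 1) * t"
proof -
  have finE: "finite E" and sub: "\<And>f. f \<in> E \<Longrightarrow> V f \<subseteq> Vs"
    using H unfolding hypergraph_def by auto
  have "card (V e) - 1 \<le> (\<Sum>f\<in>{f\<in>E. v \<in> V f}. card (V f) - 1)"
    by (rule member_le_sum[where f="\<lambda>f. card (V f) - 1"]) (use e v finE in auto)
  also have "\<dots> \<le> (card Vs - 1) * t"
    using vertex_sum[OF H _ ct, of v] sub[OF e] v by auto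
  finally show ?thesis .
qed

theorem proposition4p5:
  "\<exists>\<delta>0>0. \<forall>\<delta>::real. 0 < \<delta> \<and> \<delta> \<le> \<delta>0 \<longrightarrow>
     (\<exists>n0::nat. \<forall>(t::nat) (k::nat) (n::nat) (Vs::nat set) (E::nat set) (V::nat \<Rightarrow> nat set) e.
        n \<ge> n0 \<longrightarrow> k\<^sup>2 - k + 2 \<le> n \<longrightarrow> n \<le> k\<^sup>2 + k + 1 \<longrightarrow>
        hypergraph Vs E V \<longrightarrow> card Vs = n \<longrightarrow>
        codegree Vs E V \<le> t \<longrightarrow>
        (\<forall>f\<in>E. real (card (V f)) \<ge> (1 - \<delta>) * sqrt (real n)) \<longrightarrow>
        real (card {f\<in>E. card (V f) \<le> k}) \<le> real t / (2 * \<delta>) \<longrightarrow>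
        e \<in> E \<longrightarrow> card (V e) \<le> k \<longrightarrow>
        int (card (nbhd E V e)) \<le> int t * int n - 3)"
proof (rule exI[of _ "1/4"], rule conjI, simp, intro allI impI, elim conjE)
  fix \<delta> :: real
  assume d0: "0 < \<delta>" and d1: "\<delta> \<le> 1/4"
  show "\<exists>n0::nat. \<forall>(t::nat) (k::nat) (n::nat) (Vs::nat set) (E::nat set) (V::nat \<Rightarrow> nat set) e.
        n \<ge> n0 \<longrightarrow> k\<^sup>2 - k + 2 \<le> n \<longrightarrow> n \<le> k\<^sup>2 + k + 1 \<longrightarrow>
        hypergraph Vs E V \<longrightarrow> card Vs = n \<longrightarrow>
        codegree Vs E V \<le> t \<longrightarrow>
        (\<forall>f\<in>E. real (card (V f)) \<ge> (1 - \<delta>) * sqrt (real n)) \<longrightarrow>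
        real (card {f\<in>E. card (V f) \<le> k}) \<le> real t / (2 * \<delta>) \<longrightarrow>
        e \<in> E \<longrightarrow> card (V e) \<le> k \<longrightarrow>
        int (card (nbhd E V e)) \<le> int t * int n - 3"
  proof (rule exI[of _ "nat \<lceil>9 / \<delta>\<^sup>2\<rceil>"], intro allI impI)
    fix t k n :: nat and Vs E :: "nat set" and V :: "nat \<Rightarrow> nat set" and e :: nat
    assume nn0: "nat \<lceil>9 / \<delta>\<^sup>2\<rceil> \<le> n" and kl: "k\<^sup>2 - k + 2 \<le> n" and ku: "n \<le> k\<^sup>2 + k + 1"
      and H: "hypergraph Vs E V" and cV: "card Vs = n" and ct: "codegree Vs E V \<le> t"
      and big: "\<forall>f\<in>E. real (card (V f)) \<ge> (1 - \<delta>) * sqrt (real n)"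
      and sm: "real (card {f\<in>E. card (V f) \<le> k}) \<le> real t / (2 * \<delta>)"
      and e: "e \<in> E" and ek: "card (V e) \<le> k"
    define s where "s = card (V e)"
    define N where "N = nbhd E V e"
    define Sm where "Sm = {f\<in>E. card (V f) \<le> k}"
    define w where "w = (\<lambda>f. card (V f \<inter> V e) * (card (V f) - 1))"
    have finVs: "finite Vs" and finE: "finite E" and sub: "\<And>f. f \<in> E \<Longrightarrow> V f \<subseteq> Vs"
      and ne: "\<And>f. f \<in> E \<Longrightarrow> V f \<noteq> {}"
      using H unfolding hypergraph_def by auto
    have "9 / \<delta>\<^sup>2 \<le> real n" using nn0 by linarith
    hence "sqrt (9 / \<delta>\<^sup>2) \<le> sqrt (real n)" by (rule real_sqrt_le_mono)
    moreover have "sqrt (9 / \<delta>\<^sup>2) = 3 / \<delta>" using d0 by (simp add: real_sqrt_divide)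
    ultimately have sq: "3 / \<delta> \<le> sqrt (real n)" by simp
    hence dsq: "3 \<le> \<delta> * sqrt (real n)" using d0 by (simp add: field_simps)
    have "12 \<le> 3 / \<delta>" using d0 d1 by (simp add: field_simps)
    hence sq12: "12 \<le> sqrt (real n)" using sq by linarith
    have sbig: "real s \<ge> (1 - \<delta>) * sqrt (real n)" using big e s_def by auto
    have "(1 - \<delta>) * sqrt (real n) \<ge> (3/4) * 12"
      using d1 sq12 by (intro mult_mono) auto
    hence s4: "s \<ge> 4" using sbig by linarith
    have k4: "k \<ge> 4" using s4 ek s_def by simp
    have kk: "k \<le> k\<^sup>2" by (simp add: power2_eq_square)
    have kreal: "real k ^ 2 - real k + 2 \<le> real n"
    proof -
      have "real (k\<^sup>2 - k + 2) \<le> real n" using kl by linarith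
      thus ?thesis using kk by (simp add: of_nat_diff)
    qed
    have ksq: "real k - 1/2 < sqrt (real n)"
    proof (rule ccontr)
      assume "\<not> ?thesis"
      hence "sqrt (real n) \<le> real k - 1/2" by simp
      hence "sqrt (real n) ^ 2 \<le> (real k - 1/2) ^ 2" by (intro power_mono) auto
      hence "real n \<le> (real k - 1/2) ^ 2" by simp
      thus False using kreal by (simp add: power2_eq_square algebra_simps)
    qed
    have mk: "(1 - 2*\<delta>) * real k \<le> (1 - \<delta>) * sqrt (real n) - 1"
    proof -
      have "(1 - 2*\<delta>) * real k \<le> (1 - 2*\<delta>) * (sqrt (real n) + 1/2)"
        using ksq d1 by (intro mult_left_mono) auto
      thus ?thesis using dsq d0 by (simp add: algebra_simps)
    qed
    have perf: "real k \<le> real (w f) + (if f \<in> Sm then 2 * \<delta> * real k else 0)" if fN: "f \<in> N" for f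
    proof -
      have fE: "f \<in> E" and int: "V e \<inter> V f \<noteq> {}" using fN unfolding N_def nbhd_def by auto
      have "finite (V f)" using sub[OF fE] finVs finite_subset by blast
      hence "card (V f \<inter> V e) \<ge> 1" using int
        by (metis Int_commute One_nat_def Suc_leI card_gt_0_iff finite_Int)
      hence wf: "w f \<ge> card (V f) - 1" unfolding w_def by simp
      have cf1: "card (V f) \<ge> 1"
        using ne[OF fE] \<open>finite (V f)\<close> by (simp add: Suc_leI card_gt_0_iff)
      show ?thesis
      proof (cases "f \<in> Sm")
        case True
        have "real (card (V f) - 1) = real (card (V f)) - 1" using cf1 by (simp add: of_nat_diff)
        moreover have "real (w f) \<ge> real (card (V f) - 1)" using wf by (rule of_nat_mono)
        moreover have "real (card (V f)) \<ge> (1 - \<delta>) * sqrt (real n)" using big fE by blast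
        ultimately have "real (w f) \<ge> (1 - \<delta>) * sqrt (real n) - 1" by linarith
        thus ?thesis using True mk by (simp add: algebra_simps)
      next
        case False
        hence "card (V f) \<ge> k + 1" using fE unfolding Sm_def by auto
        thus ?thesis using False wf by simp
      qed
    qed
    have finN: "finite N" unfolding N_def nbhd_def using finE by simp
    have NS: "N \<inter> Sm \<subseteq> Sm - {e}" unfolding N_def nbhd_def by auto
    have eSm: "e \<in> Sm" using e ek unfolding Sm_def by simp
    have finSm: "finite Sm" unfolding Sm_def using finE by simp
    have cNS: "real (card (N \<inter> Sm)) \<le> real (card Sm) - 1"
    proof -
      have "card (N \<inter> Sm) \<le> card (Sm - {e})" using NS finSm by (intro card_mono) auto
      also have "\<dots> = card Sm - 1" using eSm by simp
      finally have "card (N \<inter> Sm) \<le> card Sm - 1" .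
      moreover have "card Sm \<ge> 1" using eSm finSm card_0_eq[OF finSm] by (cases "card Sm") auto
      ultimately show ?thesis by (simp add: of_nat_diff)
    qed
    have "real k * real (card N) = (\<Sum>f\<in>N. real k)" by simp
    also have "\<dots> \<le> (\<Sum>f\<in>N. real (w f) + (if f \<in> Sm then 2 * \<delta> * real k else 0))"
      by (rule sum_mono) (rule perf)
    also have "\<dots> = (\<Sum>f\<in>N. real (w f)) + 2 * \<delta> * real k * real (card (N \<inter> Sm))"
      using finN by (simp add: sum.distrib sum.If_cases)
    finally have A1: "real k * real (card N) \<le> real (\<Sum>f\<in>N. w f) + 2 * \<delta> * real k * real (card (N \<inter> Sm))"
      by simp
    have "(\<Sum>f\<in>N. w f) \<le> (\<Sum>f\<in>E-{e}. w f)"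
      by (rule sum_mono2) (use finE in \<open>auto simp: N_def nbhd_def\<close>)
    also have "\<dots> \<le> s * ((n - 1) * t - (s - 1))"
      using edge_sum[OF H ct e] unfolding w_def s_def cV .
    finally have A2: "(\<Sum>f\<in>N. w f) \<le> s * ((n - 1) * t - (s - 1))" .
    obtain v where v: "v \<in> V e" using ne[OF e] by auto
    have lb: "s - 1 \<le> (n - 1) * t" using vertex_lb[OF H ct e v] unfolding s_def cV .
    have "s \<le> n" unfolding s_def cV[symmetric] using sub[OF e] finVs by (rule card_mono[rotated])
    hence n1: "n \<ge> 1" using s4 by linarith
    define A where "A = real n * real t - real t - real s + 1"
    have Aeq: "real ((n - 1) * t - (s - 1)) = A"
      using lb n1 s4 unfolding A_def by (simp add: of_nat_diff algebra_simps)
    have A0: "A \<ge> 0" using Aeq by (metis of_nat_0_le_iff)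
    have "real (s * ((n - 1) * t - (s - 1))) \<le> real k * A"
      using Aeq A0 ek s_def by (simp add: mult_right_mono)
    moreover have "real (\<Sum>f\<in>N. w f) \<le> real (s * ((n - 1) * t - (s - 1)))"
      using A2 by (rule of_nat_mono)
    moreover have "2 * \<delta> * real k * real (card (N \<inter> Sm)) \<le> 2 * \<delta> * real k * (real (card Sm) - 1)"
      using cNS d0 by (intro mult_left_mono) auto
    ultimately have B1: "real k * real (card N) \<le> real k * A + 2 * \<delta> * real k * (real (card Sm) - 1)"
      using A1 by linarith
    have "2 * \<delta> * real (card Sm) \<le> real t" using sm d0 unfolding Sm_def by (simp add: field_simps)
    hence "real k * (2 * \<delta> * real (card Sm) - 2 * \<delta>) \<le> real k * (real t - 2 * \<delta>)"
      by (intro mult_left_mono) auto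
    hence "2 * \<delta> * real k * (real (card Sm) - 1) \<le> real k * (real t - 2 * \<delta>)"
      by (simp add: algebra_simps)
    hence "real k * real (card N) \<le> real k * (A + real t - 2 * \<delta>)"
      using B1 by (simp add: algebra_simps)
    hence "real (card N) \<le> A + real t - 2 * \<delta>" using k4 by (simp add: mult_le_cancel_left)
    hence "real (card N) \<le> real t * real n - 3" using d0 s4 unfolding A_def by (simp add: algebra_simps)
    hence "real_of_int (int (card N)) \<le> real_of_int (int t * int n - 3)" by simp
    thus "int (card (nbhd E V e)) \<le> int t * int n - 3" unfolding N_def of_int_le_iff .
  qed
qed

end
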